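(* Let $q\in\mathbb{C}$ with $0<|q|\le 1$ and $A\in M_n$. (a) If $A\in\Pi^n_{s,\alpha}$ for some $\alpha\in[0,\pi/2)$, then $|q|\cos(\alpha)\,\|A\|\le w_q(A)\le \|A\|$. (b) If either $A,A^2\in\Pi^n_{s,\alpha}$ for some $\alpha\in[0,\pi/2)$, or $A$ is accretive-dissipative, then $\frac{|q|}{\sqrt2}\|A\|\le w_q(A)\le\|A\|$.
   Context: $M_n$ is the algebra of complex $n\times n$ matrices with the operator (spectral) norm $\|\cdot\|$. For $|q|\le1$, $W_q(A)=\{\langle Ax,y\rangle: x,y\in\mathbb{C}^n,\ \|x\|=\|y\|=1,\ \langle x,y\rangle=q\}$ and $w_q(A)=\sup\{|z|:z\in W_q(A)\}$. The numerical range is $W(A)=\{\langle Ax,x\rangle:\|x\|=1\}$. For $\alpha\in[0,\pi/2)$, $S_\alpha=\{z\in\mathbb{C}:\operatorname{Re}z>0,\ |\operatorname{Im}z|\le\tan(\alpha)\operatorname{Re}z\}$ and $\Pi^n_{s,\alpha}=\{A\in M_n: W(A)\subseteq S_\alpha\}$ (sectorial matrices). With $\mathcal{R}(A)=\frac{A+A^*}{2}$, $\mathcal{I}(A)=\frac{A-A^*}{2i}$, $A$ is accretive-dissipative if $\mathcal{R}(A)>0$ and $\mathcal{I}(A)>0$ (positive definite). *)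

theory Defs
  imports "HOL-Analysis.Analysis"
begin

text \<open>Matrices in M_n are rendered as complex ^'n ^'n, vectors as complex ^'n
  (Euclidean norm = norm on vec).\<close>

definition cinner :: "complex ^'n \<Rightarrow> complex ^'n \<Rightarrow> complex" where
  "cinner x y = (\<Sum>i\<in>UNIV. x $ i * cnj (y $ i))"

definition adjoint_mat :: "complex ^'n ^'n \<Rightarrow> complex ^'n ^'n" where
  "adjoint_mat A = (\<chi> i j. cnj (A $ j $ i))"

definition op_norm :: "complex ^'n ^'n \<Rightarrow> real" where
  "op_norm A = onorm (\<lambda>x. A *v x)"

definition q_num_range :: "complex \<Rightarrow> complex ^'n ^'n \<Rightarrow> complex set" where
  "q_num_range q A = {cinner (A *v x) y | x y. norm x = 1 \<and> norm y = 1 \<and> cinner x y = q}"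

definition q_num_radius :: "complex \<Rightarrow> complex ^'n ^'n \<Rightarrow> real" where
  "q_num_radius q A = Sup (cmod ` q_num_range q A)"

definition num_range :: "complex ^'n ^'n \<Rightarrow> complex set" where
  "num_range A = {cinner (A *v x) x | x. norm x = 1}"

definition sector :: "real \<Rightarrow> complex set" where
  "sector \<alpha> = {z. Re z > 0 \<and> \<bar>Im z\<bar> \<le> tan \<alpha> * Re z}"

definition sectorial :: "real \<Rightarrow> complex ^'n ^'n \<Rightarrow> bool" where
  "sectorial \<alpha> A \<longleftrightarrow> num_range A \<subseteq> sector \<alpha>"

definition real_part_mat :: "complex ^'n ^'n \<Rightarrow> complex ^'n ^'n" where
  "real_part_mat A = (\<chi> i j. (A $ i $ j + adjoint_mat A $ i $ j) / 2)"

definition imag_part_mat :: "complex ^'n ^'n \<Rightarrow> complex ^'n ^'n" where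
  "imag_part_mat A = (\<chi> i j. (A $ i $ j - adjoint_mat A $ i $ j) / (2 * \<i>))"

definition pos_def :: "complex ^'n ^'n \<Rightarrow> bool" where
  "pos_def H \<longleftrightarrow> adjoint_mat H = H \<and> (\<forall>x. x \<noteq> 0 \<longrightarrow> Re (cinner (H *v x) x) > 0)"

definition accretive_dissipative :: "complex ^'n ^'n \<Rightarrow> bool" where
  "accretive_dissipative A \<longleftrightarrow> pos_def (real_part_mat A) \<and> pos_def (imag_part_mat A)"

end

theory Submission
  imports Defs
begin

lemma cinner_add_left: "cinner (x + y) z = cinner x z + cinner y z"
  by (simp add: cinner_def sum.distrib distrib_right)
lemma cinner_add_right: "cinner x (y + z) = cinner x y + cinner x z"
  by (simp add: cinner_def sum.distrib distrib_left)
lemma cinner_diff_left: "cinner (x - y) z = cinner x z - cinner y z"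
  by (simp add: cinner_def sum_subtractf left_diff_distrib)
lemma cinner_diff_right: "cinner x (y - z) = cinner x y - cinner x z"
  by (simp add: cinner_def sum_subtractf right_diff_distrib)
lemma cinner_smult_left: "cinner (c *s x) y = c * cinner x y"
  by (simp add: cinner_def sum_distrib_left mult.assoc)
lemma cinner_smult_right: "cinner x (c *s y) = cnj c * cinner x y"
  by (simp add: cinner_def sum_distrib_left algebra_simps)
lemma cinner_commute: "cinner y x = cnj (cinner x y)"
  by (simp add: cinner_def mult.commute)
lemma cinner_zero_left[simp]: "cinner 0 y = 0" by (simp add: cinner_def)
lemma cinner_zero_right[simp]: "cinner x 0 = 0" by (simp add: cinner_def)
lemma cinner_self: "cinner x x = complex_of_real ((norm x)^2)"
proof -
  have "cinner x x = (\<Sum>i\<in>UNIV. complex_of_real ((cmod (x$i))^2))"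
    unfolding cinner_def by (intro sum.cong refl) (metis complex_norm_square)
  also have "\<dots> = complex_of_real (\<Sum>i\<in>UNIV. (cmod (x$i))^2)" by simp
  also have "(\<Sum>i\<in>UNIV. (cmod (x$i))^2) = (norm x)^2"
    by (simp add: norm_vec_def L2_set_def sum_nonneg)
  finally show ?thesis .
qed
lemma norm_smult: "norm (c *s (x::complex^'n)) = cmod c * norm x"
proof -
  have "(norm (c *s x))^2 = (cmod c * norm x)^2"
    by (simp add: norm_vec_def L2_set_def sum_nonneg power_mult_distrib norm_mult sum_distrib_left)
  thus ?thesis by (simp add: power2_eq_iff_nonneg)
qed
lemma mv_add: "A *v (x + y) = A *v x + (A::complex^'n^'m) *v y"
  by (simp add: matrix_vector_right_distrib)
lemma mv_diff: "A *v (x - y) = A *v x - (A::complex^'n^'m) *v y"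
  by (simp add: matrix_vector_mult_diff_distrib)
lemma mv_smult: "A *v (c *s x) = c *s ((A::complex^'n^'m) *v x)"
  by (simp add: vec_eq_iff matrix_vector_mult_def vector_scalar_mult_def sum_distrib_left algebra_simps)
lemma cinner_adj: "cinner (A *v x) y = cinner x (adjoint_mat A *v y)"
proof -
  have "cinner (A *v x) y = (\<Sum>i\<in>UNIV. \<Sum>j\<in>UNIV. A$i$j * x$j * cnj (y$i))"
    unfolding cinner_def matrix_vector_mult_def by (simp add: sum_distrib_right)
  also have "\<dots> = (\<Sum>j\<in>UNIV. \<Sum>i\<in>UNIV. A$i$j * x$j * cnj (y$i))" by (rule sum.swap)
  also have "\<dots> = cinner x (adjoint_mat A *v y)"
    unfolding cinner_def matrix_vector_mult_def adjoint_mat_def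
    by (simp add: sum_distrib_left mult_ac)
  finally show ?thesis .
qed

lemma mult_cnj_sq: "c * cnj c = (complex_of_real (cmod c))^2"
  by (metis complex_norm_square of_real_power)
lemma cnj_mult_sq: "cnj c * c = (complex_of_real (cmod c))^2"
  by (metis mult_cnj_sq mult.commute)

lemma s_expand: "cinner (A *v (x + c *s y)) (x + c *s y) = cinner (A*v x) x + cnj c * cinner (A *v x) y
   + c * cinner (A *v y) x + complex_of_real ((cmod c)^2) * cinner (A *v y) y"
  by (simp add: mv_add mv_smult cinner_add_left cinner_add_right cinner_smult_left cinner_smult_right
      mult_cnj_sq cnj_mult_sq algebra_simps)

lemma s_scale: "cinner (A *v (c *s x)) (c *s x) = complex_of_real ((cmod c)^2) * cinner (A *v x) x"
  by (simp add: mv_smult cinner_smult_left cinner_smult_right mult_cnj_sq cnj_mult_sq algebra_simps)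

lemma cs_scalar:
  fixes a b :: real and c :: complex
  assumes H: "\<And>t. 0 \<le> a + 2 * Re (cnj t * c) + (cmod t)^2 * b" and b: "0 \<le> b"
  shows "(cmod c)^2 \<le> a * b"
proof -
  have a: "0 \<le> a" using H[of 0] by simp
  show ?thesis
  proof (cases "b = 0")
    case True
    show ?thesis
    proof (rule ccontr)
      assume "\<not> ?thesis"
      hence c0: "c \<noteq> 0" using True by auto
      define t where "t = - complex_of_real ((a+1) / (cmod c)^2) * c"
      have "cnj t * c = - complex_of_real ((a+1) / (cmod c)^2) * (cnj c * c)"
        by (simp add: t_def)
      also have "cnj c * c = complex_of_real ((cmod c)^2)"
        by (simp add: cnj_mult_sq)
      finally have "cnj t * c = - complex_of_real (a+1)" using c0 by simp
      thus False using H[of t] True a by simp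
    qed
  next
    case False
    hence bp: "b > 0" using b by simp
    define t where "t = - c / complex_of_real b"
    have e1: "cnj t * c = - complex_of_real ((cmod c)^2 / b)"
      by (simp add: t_def cnj_mult_sq)
    have e2: "(cmod t)^2 = (cmod c)^2 / b^2"
      by (simp add: t_def norm_divide power_divide)
    have "0 \<le> a - 2 * ((cmod c)^2 / b) + (cmod c)^2 / b^2 * b"
      using H[of t] e1 e2 by simp
    also have "(cmod c)^2 / b^2 * b = (cmod c)^2 / b" using bp by (simp add: power2_eq_square)
    finally have "(cmod c)^2 / b \<le> a" by simp
    thus ?thesis using bp by (simp add: divide_le_eq mult.commute)
  qed
qed

lemma cinner_cs: "cmod (cinner a b) \<le> norm a * norm b"
proof -
  have "(cmod (cinner a b))^2 \<le> (norm a)^2 * (norm b)^2"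
  proof (rule cs_scalar)
    fix t
    have "cinner (a + t *s b) (a + t *s b) = cinner a a + cnj t * cinner a b + t * cinner b a
       + complex_of_real ((cmod t)^2) * cinner b b"
      by (simp add: cinner_add_left cinner_add_right cinner_smult_left cinner_smult_right
      mult_cnj_sq cnj_mult_sq algebra_simps)
    hence "complex_of_real ((norm (a + t *s b))^2) = complex_of_real ((norm a)^2) + cnj t * cinner a b
       + t * cnj (cinner a b) + complex_of_real ((cmod t)^2) * complex_of_real ((norm b)^2)"
      by (simp add: cinner_self cinner_commute[of a b])
    hence "(norm (a + t *s b))^2 = (norm a)^2 + 2 * Re (cnj t * cinner a b) + (cmod t)^2 * (norm b)^2"
      by (auto simp: complex_eq_iff)
    thus "0 \<le> (norm a)^2 + 2 * Re (cnj t * cinner a b) + (cmod t)^2 * (norm b)^2"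
      by (metis zero_le_power2)
  qed simp
  hence "(cmod (cinner a b))^2 \<le> (norm a * norm b)^2" by (simp add: power_mult_distrib)
  thus ?thesis by (simp add: power2_le_iff_abs_le)
qed

definition sf :: "complex^'n^'n \<Rightarrow> complex^'n \<Rightarrow> complex^'n \<Rightarrow> complex" where
  "sf A x y = cinner (A *v x) y"

lemma sf_expand_Re: "Re (u * sf A (x + t *s y) (x + t *s y)) = Re (u * sf A x x) + Re (cnj t * (u * sf A x y))
   + Re (t * (u * sf A y x)) + (cmod t)^2 * Re (u * sf A y y)"
proof -
  have "u * sf A (x + t *s y) (x + t *s y) = u * sf A x x + cnj t * (u * sf A x y)
   + t * (u * sf A y x) + complex_of_real ((cmod t)^2) * (u * sf A y y)"
    unfolding sf_def s_expand by (simp add: algebra_simps)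
  thus ?thesis by simp
qed

lemma cs_h:
  assumes P: "\<forall>v. 0 \<le> Re (u * sf A v v)"
  shows "(cmod ((u * sf A x y + cnj u * cnj (sf A y x)) / 2))^2 \<le> Re (u * sf A x x) * Re (u * sf A y y)"
proof (rule cs_scalar)
  fix t
  have R: "Re (cnj t * (cnj u * cnj (sf A y x))) = Re (t * (u * sf A y x))"
    by (simp add: algebra_simps)
  have "2 * Re (cnj t * ((u * sf A x y + cnj u * cnj (sf A y x)) / 2))
     = Re (cnj t * (u * sf A x y)) + Re (cnj t * (cnj u * cnj (sf A y x)))"
    by (simp add: distrib_left)
  also have "\<dots> = Re (cnj t * (u * sf A x y)) + Re (t * (u * sf A y x))" using R by simp
  finally have C: "2 * Re (cnj t * ((u * sf A x y + cnj u * cnj (sf A y x)) / 2))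
     = Re (cnj t * (u * sf A x y)) + Re (t * (u * sf A y x))" .
  show "0 \<le> Re (u * sf A x x) + 2 * Re (cnj t * ((u * sf A x y + cnj u * cnj (sf A y x)) / 2))
     + (cmod t)^2 * Re (u * sf A y y)"
    using P[rule_format, of "x + t *s y"] sf_expand_Re[of u A x t y] C by linarith
qed (use P in auto)

lemma sqrt_sum_le:
  fixes a1 b1 a2 b2 :: real
  assumes "0 \<le> a1" "0 \<le> b1" "0 \<le> a2" "0 \<le> b2"
  shows "sqrt (a1*b1) + sqrt (a2*b2) \<le> sqrt ((a1+a2)*(b1+b2))"
proof (rule real_le_rsqrt)
  have e: "sqrt (a1*b1) * sqrt (a2*b2) = sqrt (a1*b2) * sqrt (a2*b1)"
    by (simp add: real_sqrt_mult[symmetric] mult_ac)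
  have "0 \<le> (sqrt (a1*b2) - sqrt (a2*b1))^2" by simp
  hence g: "2 * (sqrt (a1*b2) * sqrt (a2*b1)) \<le> a1*b2 + a2*b1"
    using assms by (simp add: power2_eq_square algebra_simps)
  have "(sqrt (a1*b1) + sqrt (a2*b2))^2 = a1*b1 + a2*b2 + 2 * (sqrt (a1*b1) * sqrt (a2*b2))"
    using assms by (simp add: power2_eq_square algebra_simps)
  also have "\<dots> \<le> (a1+a2)*(b1+b2)" using e g by (simp add: algebra_simps)
  finally show "(sqrt (a1*b1) + sqrt (a2*b2))^2 \<le> (a1+a2)*(b1+b2)" .
qed

lemma two_dir:
  assumes n: "cmod u1 = cmod u2"
    and P1: "\<forall>v. 0 \<le> Re (u1 * sf A v v)" and P2: "\<forall>v. 0 \<le> Re (u2 * sf A v v)"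
  shows "\<bar>Im (cnj u2 * u1)\<bar> * cmod (sf A x y)
     \<le> cmod u1 * cmod (u1 + u2) * sqrt (cmod (sf A x x) * cmod (sf A y y))"
proof -
  define c where "c = cnj (sf A y x)"
  define X where "X = u1 * sf A x y + cnj u1 * c"
  define Y where "Y = u2 * sf A x y + cnj u2 * c"
  define a1 where "a1 = Re (u1 * sf A x x)"
  define b1 where "b1 = Re (u1 * sf A y y)"
  define a2 where "a2 = Re (u2 * sf A x x)"
  define b2 where "b2 = Re (u2 * sf A y y)"
  have nn: "0 \<le> a1" "0 \<le> b1" "0 \<le> a2" "0 \<le> b2"
    using P1 P2 by (auto simp: a1_def a2_def b1_def b2_def)
  have "(cmod (X/2))^2 \<le> a1 * b1" using cs_h[OF P1, of x y] by (simp add: X_def c_def a1_def b1_def)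
  hence "cmod X / 2 \<le> sqrt (a1*b1)" by (intro real_le_rsqrt) (simp add: norm_divide)
  hence hX: "cmod X \<le> 2 * sqrt (a1*b1)" by simp
  have "(cmod (Y/2))^2 \<le> a2 * b2" using cs_h[OF P2, of x y] by (simp add: Y_def c_def a2_def b2_def)
  hence "cmod Y / 2 \<le> sqrt (a2*b2)" by (intro real_le_rsqrt) (simp add: norm_divide)
  hence hY: "cmod Y \<le> 2 * sqrt (a2*b2)" by simp
  define w where "w = cnj u2 * u1"
  have id: "cnj u2 * X - cnj u1 * Y = (w - cnj w) * sf A x y"
    by (simp add: X_def Y_def w_def algebra_simps)
  have "w - cnj w = complex_of_real (2 * Im w) * \<i>" by (simp add: complex_eq_iff)
  hence cw: "cmod (w - cnj w) = 2 * \<bar>Im w\<bar>" by (simp add: norm_mult)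
  have "2 * \<bar>Im w\<bar> * cmod (sf A x y) = cmod (cnj u2 * X - cnj u1 * Y)"
    using id cw by (simp add: norm_mult)
  also have "\<dots> \<le> cmod (cnj u2 * X) + cmod (cnj u1 * Y)" by (rule norm_triangle_ineq4)
  also have "\<dots> = cmod u1 * (cmod X + cmod Y)" using n by (simp add: norm_mult algebra_simps)
  also have "\<dots> \<le> cmod u1 * (2 * (sqrt (a1*b1) + sqrt (a2*b2)))"
    using hX hY by (intro mult_left_mono) auto
  also have "\<dots> \<le> cmod u1 * (2 * sqrt ((a1+a2)*(b1+b2)))"
    using sqrt_sum_le[OF nn] by (intro mult_left_mono) auto
  also have "sqrt ((a1+a2)*(b1+b2)) \<le> cmod (u1+u2) * sqrt (cmod (sf A x x) * cmod (sf A y y))"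
  proof -
    have "a1 + a2 = Re ((u1+u2) * sf A x x)" by (simp add: a1_def a2_def algebra_simps)
    also have "\<dots> \<le> cmod (u1+u2) * cmod (sf A x x)" by (metis complex_Re_le_cmod norm_mult)
    finally have A1: "a1 + a2 \<le> cmod (u1+u2) * cmod (sf A x x)" .
    have "b1 + b2 = Re ((u1+u2) * sf A y y)" by (simp add: b1_def b2_def algebra_simps)
    also have "\<dots> \<le> cmod (u1+u2) * cmod (sf A y y)" by (metis complex_Re_le_cmod norm_mult)
    finally have B1: "b1 + b2 \<le> cmod (u1+u2) * cmod (sf A y y)" .
    have "(a1+a2)*(b1+b2) \<le> (cmod (u1+u2) * cmod (sf A x x)) * (cmod (u1+u2) * cmod (sf A y y))"
      using A1 B1 nn by (intro mult_mono) auto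
    hence "sqrt ((a1+a2)*(b1+b2)) \<le> sqrt ((cmod (u1+u2))^2 * (cmod (sf A x x) * cmod (sf A y y)))"
      by (simp add: power2_eq_square mult_ac)
    thus ?thesis by (simp add: real_sqrt_mult)
  qed
  finally have "2 * \<bar>Im w\<bar> * cmod (sf A x y)
     \<le> cmod u1 * (2 * (cmod (u1+u2) * sqrt (cmod (sf A x x) * cmod (sf A y y))))"
    by (simp add: mult_left_mono)
  thus ?thesis by (simp add: w_def mult_ac)
qed

lemma herm_case:
  assumes I0: "\<forall>v. Im (sf A v v) = 0" and R0: "\<forall>v. 0 \<le> Re (sf A v v)"
  shows "cmod (sf A x y) \<le> sqrt (cmod (sf A x x) * cmod (sf A y y))"
proof -
  have Pi: "\<forall>v. 0 \<le> Re (\<i> * sf A v v)" using I0 by simp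
  have "(cmod ((\<i> * sf A x y + cnj \<i> * cnj (sf A y x)) / 2))^2 \<le> 0"
    using cs_h[OF Pi, of x y] I0 by simp
  hence "\<i> * sf A x y + cnj \<i> * cnj (sf A y x) = 0" by simp
  hence e: "cnj (sf A y x) = sf A x y" by (simp add: algebra_simps)
  have P1: "\<forall>v. 0 \<le> Re (1 * sf A v v)" using R0 by simp
  have "(cmod ((1 * sf A x y + cnj 1 * cnj (sf A y x)) / 2))^2 \<le> Re (1 * sf A x x) * Re (1 * sf A y y)"
    using cs_h[OF P1, of x y] .
  hence "(cmod (sf A x y))^2 \<le> Re (sf A x x) * Re (sf A y y)" using e by simp
  also have "\<dots> \<le> cmod (sf A x x) * cmod (sf A y y)"
    using R0 by (intro mult_mono) (auto simp: complex_Re_le_cmod)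
  finally show ?thesis by (rule real_le_rsqrt)
qed

lemma unit_norm: "v \<noteq> 0 \<Longrightarrow> norm (complex_of_real (1 / norm v) *s v) = 1"
  by (simp add: norm_smult norm_divide)

lemma scale_ext:
  assumes "\<forall>v. norm v = 1 \<longrightarrow> 0 \<le> Re (u * sf A v v)"
  shows "0 \<le> Re (u * sf A v v)"
proof (cases "v = 0")
  case True thus ?thesis by (simp add: sf_def)
next
  case False
  let ?w = "complex_of_real (1 / norm v) *s v"
  have "0 \<le> Re (u * sf A ?w ?w)" using assms unit_norm[OF False] by blast
  also have "u * sf A ?w ?w = complex_of_real ((1 / norm v)^2) * (u * sf A v v)"
    unfolding sf_def s_scale by (simp add: mult_ac norm_divide)
  finally have "0 \<le> (1 / norm v)^2 * Re (u * sf A v v)" by simp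
  thus ?thesis using False by (simp add: zero_le_mult_iff)
qed

lemma norm_axis_c: "norm (axis i (1::complex)) = 1"
  by (simp add: inner_axis' norm_eq_1)

lemma cinner_axis: "cinner v (axis i 1) = v $ i"
proof -
  have "cinner v (axis i 1) = (\<Sum>k\<in>UNIV. if k = i then v $ k else 0)"
    unfolding cinner_def axis_def by (intro sum.cong) auto
  thus ?thesis by simp
qed

lemma cinner_one: "norm v = 1 \<Longrightarrow> cinner v v = 1"
  by (simp add: cinner_self)

lemma cinner_one_rev:
  assumes "cinner v v = 1" shows "norm v = 1"
proof -
  have "(norm v)^2 = 1" using assms cinner_self[of v] by (metis of_real_eq_1_iff)
  thus ?thesis by (metis abs_norm_cancel real_sqrt_abs real_sqrt_one)
qed

lemma mv_norm: "norm (A *v x) \<le> op_norm A * norm (x::complex^'n)"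
  unfolding op_norm_def by (rule onorm[OF matrix_vector_mul_bounded_linear])

lemma range_le:
  assumes "z \<in> q_num_range q (A::complex^'n^'n)" shows "cmod z \<le> op_norm A"
proof -
  obtain x y where xy: "norm x = 1" "norm y = 1" "z = cinner (A *v x) y"
    using assms unfolding q_num_range_def by blast
  have "cmod z \<le> norm (A *v x) * norm y" using xy cinner_cs[of "A *v x" y] by simp
  also have "\<dots> \<le> op_norm A" using mv_norm[of A x] xy by simp
  finally show ?thesis .
qed

lemma exists_two: assumes "CARD('n::finite) \<ge> 2" obtains i j :: "'n::finite" where "i \<noteq> j"
proof -
  have "\<not> (\<forall>a\<in>(UNIV::'n::finite set). \<forall>b\<in>UNIV. a = b)"
    using card_le_Suc0_iff_eq[of "UNIV::'n set"] assms by auto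
  thus ?thesis using that by blast
qed

lemma ortho:
  assumes "CARD('n::finite) \<ge> 2"
  shows "\<exists>z::complex^'n. norm z = 1 \<and> cinner v z = 0"
proof -
  obtain i j :: 'n where ij: "i \<noteq> j" using exists_two assms by blast
  define z0 where "z0 = cnj (v$j) *s axis i 1 - cnj (v$i) *s axis j 1"
  have c0: "cinner v z0 = 0"
    by (simp add: z0_def cinner_diff_right cinner_smult_right cinner_axis mult.commute)
  show ?thesis
  proof (cases "z0 = 0")
    case False
    have "cinner v (complex_of_real (1 / norm z0) *s z0) = 0" by (simp add: cinner_smult_right c0)
    thus ?thesis using unit_norm[OF False] by blast
  next
    case True
    have "z0 $ j = 0" using True by simp
    hence "v $ i = 0" using ij by (simp add: z0_def axis_def)
    hence "norm (axis i (1::complex)) = 1 \<and> cinner v (axis i 1) = 0"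
      by (simp add: norm_axis_c cinner_axis)
    thus ?thesis by blast
  qed
qed

lemma yconstr:
  fixes v :: "complex^'n"
  assumes v: "norm v = 1" and q1: "cmod q \<le> 1" and qc: "cmod q = 1 \<or> CARD('n) \<ge> 2"
  shows "\<exists>y1 y2. norm y1 = 1 \<and> norm y2 = 1 \<and> cinner v y1 = q \<and> cinner v y2 = q
     \<and> 2 * q * sf A v v = sf A v y1 + sf A v y2"
proof (cases "cmod q = 1")
  case True
  define y where "y = cnj q *s v"
  have "norm y = 1" using True v by (simp add: y_def norm_smult)
  moreover have "cinner v y = q" using v by (simp add: y_def cinner_smult_right cinner_one)
  moreover have "sf A v y = q * sf A v v" by (simp add: y_def sf_def cinner_smult_right)
  ultimately show ?thesis by (intro exI[of _ y]) simp
next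
  case False
  hence "CARD('n) \<ge> 2" using qc by simp
  then obtain z :: "complex^'n" where z: "norm z = 1" "cinner v z = 0" using ortho by blast
  have zv: "cinner z v = 0" using z cinner_commute[of z v] by simp
  define r where "r = sqrt (1 - (cmod q)^2)"
  have "(cmod q)^2 \<le> 1" using q1 by (intro power_le_one) auto
  hence rr: "r * r = 1 - (cmod q)^2" unfolding r_def by simp
  define y1 where "y1 = cnj q *s v + complex_of_real r *s z"
  define y2 where "y2 = cnj q *s v - complex_of_real r *s z"
  have qq: "q * cnj q = complex_of_real ((cmod q)^2)" by (simp add: mult_cnj_sq)
  have rr': "complex_of_real r * complex_of_real r = 1 - complex_of_real ((cmod q)^2)"
    by (metis rr of_real_mult of_real_1 of_real_diff)
  have "cinner y1 y1 = q * cnj q + complex_of_real r * complex_of_real r"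
    by (simp add: y1_def cinner_add_left cinner_add_right cinner_smult_left cinner_smult_right
        cinner_one v z zv algebra_simps)
  hence "cinner y1 y1 = 1" using qq rr' by simp
  hence n1: "norm y1 = 1" by (rule cinner_one_rev)
  have "cinner y2 y2 = q * cnj q + complex_of_real r * complex_of_real r"
    by (simp add: y2_def cinner_diff_left cinner_diff_right cinner_smult_left cinner_smult_right
        cinner_one v z zv algebra_simps)
  hence "cinner y2 y2 = 1" using qq rr' by simp
  hence n2: "norm y2 = 1" by (rule cinner_one_rev)
  have c1: "cinner v y1 = q"
    by (simp add: y1_def cinner_add_right cinner_smult_right cinner_one v z)
  have c2: "cinner v y2 = q"
    by (simp add: y2_def cinner_diff_right cinner_smult_right cinner_one v z)
  have "sf A v y1 + sf A v y2 = 2 * q * sf A v v"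
    by (simp add: y1_def y2_def sf_def cinner_add_right cinner_diff_right cinner_smult_right algebra_simps)
  thus ?thesis using n1 n2 c1 c2 by metis
qed

lemma sf_in: "norm x = 1 \<Longrightarrow> norm y = 1 \<Longrightarrow> cinner x y = q \<Longrightarrow> sf A x y \<in> q_num_range q A"
  unfolding q_num_range_def sf_def by blast

lemma S_nonempty:
  fixes A :: "complex^'n^'n"
  assumes q1: "cmod q \<le> 1" and qc: "cmod q = 1 \<or> CARD('n) \<ge> 2"
  shows "q_num_range q A \<noteq> {}"
proof -
  let ?v = "axis undefined (1::complex) :: complex^'n"
  have "norm ?v = 1" by (rule norm_axis_c)
  then obtain y1 y2 where "norm y1 = 1" "cinner ?v y1 = q"
    using yconstr[OF _ q1 qc, of ?v A] by blast
  thus ?thesis using sf_in[OF \<open>norm ?v = 1\<close>] by blast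
qed

lemma S_bdd: "bdd_above (cmod ` q_num_range q A)"
  using range_le by (intro bdd_aboveI2) blast

lemma W_upper:
  fixes A :: "complex^'n^'n"
  assumes q1: "cmod q \<le> 1" and qc: "cmod q = 1 \<or> CARD('n) \<ge> 2"
  shows "q_num_radius q A \<le> op_norm A"
  unfolding q_num_radius_def using S_nonempty[OF q1 qc] range_le
  by (intro cSup_least) auto

lemma W_elem: "z \<in> q_num_range q A \<Longrightarrow> cmod z \<le> q_num_radius q A"
  unfolding q_num_radius_def by (intro cSup_upper S_bdd) auto

lemma diag_le:
  fixes A :: "complex^'n^'n"
  assumes q1: "cmod q \<le> 1" and qc: "cmod q = 1 \<or> CARD('n) \<ge> 2" and v: "norm v = 1"
  shows "cmod q * cmod (sf A v v) \<le> q_num_radius q A"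
proof -
  obtain y1 y2 where y: "norm y1 = 1" "norm y2 = 1" "cinner v y1 = q" "cinner v y2 = q"
    "2 * q * sf A v v = sf A v y1 + sf A v y2"
    using yconstr[OF v q1 qc, of A] by blast
  have "2 * (cmod q * cmod (sf A v v)) = cmod (2 * q * sf A v v)" by (simp add: norm_mult)
  also have "\<dots> \<le> cmod (sf A v y1) + cmod (sf A v y2)" using y(5) by (simp add: norm_triangle_ineq)
  also have "\<dots> \<le> 2 * q_num_radius q A"
    using W_elem[OF sf_in[OF v y(1) y(3), where A=A]] W_elem[OF sf_in[OF v y(2) y(4), where A=A]] by simp
  finally show ?thesis by simp
qed

lemma opnorm_le:
  fixes A :: "complex^'n^'n"
  assumes K: "\<And>x y. norm x = 1 \<Longrightarrow> norm y = 1 \<Longrightarrow> cmod (sf A x y) \<le> K" and K0: "0 \<le> K"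
  shows "op_norm A \<le> K"
  unfolding op_norm_def
proof (rule onorm_le)
  fix x :: "complex^'n"
  show "norm (A *v x) \<le> K * norm x"
  proof (cases "A *v x = 0")
    case True thus ?thesis using K0 by simp
  next
    case False
    hence x0: "x \<noteq> 0" by auto
    define c where "c = complex_of_real (1 / norm x)"
    define x' where "x' = c *s x"
    have nx: "norm x' = 1" unfolding x'_def c_def by (rule unit_norm[OF x0])
    have ax: "A *v x' = c *s (A *v x)" by (simp add: x'_def mv_smult)
    have nax: "norm (A *v x') = norm (A *v x) / norm x"
      using ax by (simp add: c_def norm_smult norm_divide)
    hence ax0: "A *v x' \<noteq> 0" using False x0 by auto
    define y where "y = complex_of_real (1 / norm (A *v x')) *s (A *v x')"
    have ny: "norm y = 1" unfolding y_def by (rule unit_norm[OF ax0])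
    have "sf A x' y = complex_of_real (1 / norm (A *v x')) * complex_of_real ((norm (A *v x'))^2)"
      by (simp add: sf_def y_def cinner_smult_right cinner_self)
    also have "\<dots> = complex_of_real (norm (A *v x'))" using ax0 by (simp add: power2_eq_square)
    finally have "norm (A *v x') \<le> K" using K[OF nx ny] by simp
    thus ?thesis using nax x0 by (simp add: divide_le_eq)
  qed
qed

lemma fin:
  fixes A :: "complex^'n^'n"
  assumes q0: "0 < cmod q" and q1: "cmod q \<le> 1" and qc: "cmod q = 1 \<or> CARD('n) \<ge> 2"
    and c0: "0 < c"
    and H: "\<And>x y. norm x = 1 \<Longrightarrow> norm y = 1 \<Longrightarrow> c * cmod (sf A x y) \<le> sqrt (cmod (sf A x x) * cmod (sf A y y))"
  shows "cmod q * c * op_norm A \<le> q_num_radius q A"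
proof -
  let ?W = "q_num_radius q A"
  have W0: "0 \<le> ?W" using diag_le[OF q1 qc norm_axis_c, of A undefined] q0
    by (meson mult_nonneg_nonneg norm_ge_zero order_trans)
  have "op_norm A \<le> ?W / (cmod q * c)"
  proof (rule opnorm_le)
    fix x y :: "complex^'n" assume x: "norm x = 1" and y: "norm y = 1"
    have "cmod q * (c * cmod (sf A x y)) \<le> cmod q * sqrt (cmod (sf A x x) * cmod (sf A y y))"
      using H[OF x y] q0 by (intro mult_left_mono) auto
    also have "\<dots> = sqrt ((cmod q * cmod (sf A x x)) * (cmod q * cmod (sf A y y)))"
      using q0 by (simp add: real_sqrt_mult mult_ac)
    also have "\<dots> \<le> sqrt (?W * ?W)"
      using diag_le[OF q1 qc x, of A] diag_le[OF q1 qc y, of A] W0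
      by (intro real_sqrt_le_mono mult_mono) auto
    also have "\<dots> = ?W" using W0 by simp
    finally show "cmod (sf A x y) \<le> ?W / (cmod q * c)"
      using q0 c0 by (simp add: le_divide_eq mult_ac)
  next
    show "0 \<le> ?W / (cmod q * c)" using W0 q0 c0 by simp
  qed
  thus ?thesis using q0 c0 by (simp add: le_divide_eq mult_ac)
qed

lemma mat_mv: "mat c *v v = c *s (v::complex^'n)"
proof -
  have "\<And>i. (\<Sum>j\<in>UNIV. (if i = j then c else 0) * v $ j) = c * v $ i"
  proof -
    fix i
    have "(\<Sum>j\<in>UNIV. (if i = j then c else 0) * v $ j) = (\<Sum>j\<in>UNIV. if i = j then c * v $ j else 0)"
      by (intro sum.cong) auto
    thus "(\<Sum>j\<in>UNIV. (if i = j then c else 0) * v $ j) = c * v $ i" by simp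
  qed
  thus ?thesis by (simp add: vec_eq_iff matrix_vector_mult_def mat_def)
qed

lemma adj_adj: "adjoint_mat (adjoint_mat A) = A"
  by (simp add: adjoint_mat_def vec_eq_iff)

lemma sf_cont: fixes A :: "complex^'n^'n" shows "continuous_on UNIV (\<lambda>v. Re (u * sf A v v))"
proof -
  have c: "continuous_on UNIV (\<lambda>v::complex^'n. A *v v)"
    by (intro linear_continuous_on matrix_vector_mul_bounded_linear)
  show ?thesis unfolding sf_def cinner_def
    by (intro continuous_intros c continuous_on_component continuous_on_id)
qed

lemma min_arg:
  fixes A :: "complex^'n^'n" and \<epsilon> :: real
  assumes e: "\<epsilon> * \<epsilon> = 1"
    and RA: "\<And>v. norm v = 1 \<Longrightarrow> 0 < Re (sf A v v)"
    and RA2: "\<And>v. norm v = 1 \<Longrightarrow> 0 < Re (sf (A ** A) v v)"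
  shows "0 \<le> Re (sf A v v) + \<epsilon> * Im (sf A v v)"
proof -
  define u where "u = Complex 1 (- \<epsilon>)"
  have gu: "\<And>z. Re (u * z) = Re z + \<epsilon> * Im z" by (simp add: u_def)
  have "\<forall>v. norm v = 1 \<longrightarrow> 0 \<le> Re (u * sf A v v)"
  proof (rule ccontr)
    assume "\<not> ?thesis"
    then obtain v1 :: "complex^'n" where v1: "norm v1 = 1" "Re (u * sf A v1 v1) < 0" by force
    let ?g = "\<lambda>v. Re (u * sf A v v)"
    have "sphere (0::complex^'n) 1 \<noteq> {}" using v1 by auto
    then obtain x where x: "norm x = 1" and xmin: "\<And>y. norm y = 1 \<Longrightarrow> ?g x \<le> ?g y"
      using continuous_attains_inf[OF compact_sphere _ continuous_on_subset[OF sf_cont subset_UNIV],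
          of "0::complex^'n" 1 u A] by auto
    define \<mu> where "\<mu> = ?g x"
    have mu0: "\<mu> < 0" using xmin[OF v1(1)] v1 by (simp add: \<mu>_def)
    have u0: "u \<noteq> 0" by (simp add: u_def complex_eq_iff)
    define c where "c = complex_of_real \<mu> / u"
    define A' where "A' = A - mat c"
    have sfA': "\<And>a b. sf A' a b = sf A a b - c * cinner a b"
      by (simp add: sf_def A'_def matrix_vector_mult_diff_rdistrib mat_mv cinner_diff_left cinner_smult_left)
    have uc: "u * c = complex_of_real \<mu>" using u0 by (simp add: c_def)
    have cuc: "cnj u * cnj c = complex_of_real \<mu>" using uc by (metis complex_cnj_mult complex_cnj_complex_of_real)
    have uc': "\<And>z. c * (u * z) = complex_of_real \<mu> * z" by (metis uc mult.assoc mult.commute)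
    have cuc': "\<And>z. cnj c * (cnj u * z) = complex_of_real \<mu> * z" by (metis cuc mult.assoc mult.commute)
    have P': "\<forall>v. 0 \<le> Re (u * sf A' v v)"
    proof
      fix v
      show "0 \<le> Re (u * sf A' v v)"
      proof (rule scale_ext, intro allI impI)
        fix w :: "complex^'n" assume w: "norm w = 1"
        have "u * sf A' w w = u * sf A w w - complex_of_real \<mu>"
          using uc w by (simp add: sfA' cinner_one algebra_simps)
        thus "0 \<le> Re (u * sf A' w w)" using xmin[OF w] by (simp add: \<mu>_def)
      qed
    qed
    have "u * sf A' x x = u * sf A x x - complex_of_real \<mu>"
      using uc x by (simp add: sfA' cinner_one algebra_simps)
    hence hx0: "Re (u * sf A' x x) = 0" by (simp add: \<mu>_def)
    define B where "B = adjoint_mat A"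
    define w where "w = (u/2) *s (A *v x) + (cnj u / 2) *s (B *v x) - complex_of_real \<mu> *s x"
    have hw: "\<And>y. cinner w y = (u * sf A' x y + cnj u * cnj (sf A' y x)) / 2"
    proof -
      fix y
      have e1: "cnj (sf A y x) = cinner (B *v x) y"
        unfolding sf_def B_def cinner_adj[of "adjoint_mat A"] adj_adj by (rule cinner_commute[symmetric])
      have e2: "cnj (cinner y x) = cinner x y" by (rule cinner_commute[symmetric])
      show "cinner w y = (u * sf A' x y + cnj u * cnj (sf A' y x)) / 2"
        unfolding sfA' using e1 e2 uc cuc
        apply (simp add: w_def cinner_add_left cinner_diff_left cinner_smult_left sf_def algebra_simps
            add_divide_distrib diff_divide_distrib)
        apply (simp add: uc' cuc')
        done
    qed
    have "\<And>y. cinner w y = 0"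
    proof -
      fix y
      have "(cmod ((u * sf A' x y + cnj u * cnj (sf A' y x)) / 2))^2 \<le> 0"
        using cs_h[OF P', of x y] hx0 by simp
      hence "u * sf A' x y + cnj u * cnj (sf A' y x) = 0" by simp
      thus "cinner w y = 0" using hw[of y] by simp
    qed
    hence "w = 0" using cinner_self[of w] by (metis norm_eq_zero of_real_eq_0_iff zero_less_power2 less_irrefl)
    hence veq: "cnj u *s (B *v x) = 2 * complex_of_real \<mu> *s x - u *s (A *v x)"
      unfolding w_def by (simp add: vec_eq_iff field_simps)
    define p where "p = cinner (A *v x) (B *v x)"
    define \<sigma> where "\<sigma> = sf A x x"
    define N where "N = (norm (A *v x))^2"
    have "u * p = cinner (A *v x) (cnj u *s (B *v x))" by (simp add: p_def cinner_smult_right)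
    also have "\<dots> = 2 * complex_of_real \<mu> * \<sigma> - cnj u * complex_of_real N"
      unfolding veq by (simp add: cinner_diff_right cinner_smult_right cinner_self N_def \<sigma>_def sf_def
          cinner_commute[of x "A *v x"])
    finally have eq: "u * p = 2 * complex_of_real \<mu> * \<sigma> - cnj u * complex_of_real N" .
    have eqR: "Re p + \<epsilon> * Im p = 2 * \<mu> * Re \<sigma> - N"
      using arg_cong[OF eq, of Re] by (simp add: u_def)
    have eqI: "Im p - \<epsilon> * Re p = 2 * \<mu> * Im \<sigma> - \<epsilon> * N"
      using arg_cong[OF eq, of Im] by (simp add: u_def)
    have "\<epsilon> * (Im p - \<epsilon> * Re p) = \<epsilon> * (2 * \<mu> * Im \<sigma> - \<epsilon> * N)" using eqI by simp
    hence eqI': "\<epsilon> * Im p - Re p = 2 * \<mu> * \<epsilon> * Im \<sigma> - N"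
      using e by (simp add: algebra_simps)
    have rp: "Re p = \<mu> * (Re \<sigma> - \<epsilon> * Im \<sigma>)" using eqR eqI' by (simp add: algebra_simps)
    have "\<mu> = Re \<sigma> + \<epsilon> * Im \<sigma>" unfolding \<mu>_def \<sigma>_def by (rule gu)
    moreover have "0 < Re \<sigma>" using RA[OF x] by (simp add: \<sigma>_def)
    ultimately have "0 < Re \<sigma> - \<epsilon> * Im \<sigma>" using mu0 by linarith
    hence "Re p < 0" using rp mu0 by (simp add: mult_neg_pos)
    moreover have "p = sf (A ** A) x x"
      by (simp add: p_def B_def sf_def cinner_adj[symmetric] matrix_vector_mul_assoc)
    ultimately show False using RA2[OF x] by simp
  qed
  hence "0 \<le> Re (u * sf A v v)" by (rule scale_ext)
  thus ?thesis by (simp only: gu)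
qed

lemma sect_unit:
  fixes A :: "complex^'n^'n"
  assumes "sectorial \<alpha> A" "norm v = 1"
  shows "0 < Re (sf A v v) \<and> \<bar>Im (sf A v v)\<bar> \<le> tan \<alpha> * Re (sf A v v)"
proof -
  have "sf A v v \<in> num_range A" using assms(2) unfolding num_range_def sf_def by blast
  thus ?thesis using assms(1) unfolding sectorial_def sector_def by blast
qed

lemma partA_bound:
  fixes A :: "complex^'n^'n"
  assumes a0: "0 \<le> \<alpha>" and a1: "\<alpha> < pi/2" and S: "sectorial \<alpha> A"
    and x: "norm x = 1" and y: "norm y = 1"
  shows "cos \<alpha> * cmod (sf A x y) \<le> sqrt (cmod (sf A x x) * cmod (sf A y y))"
proof (cases "\<alpha> = 0")
  case True
  have I1: "\<forall>v. norm v = 1 \<longrightarrow> 0 \<le> Re (\<i> * sf A v v)" using sect_unit[OF S] True by simp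
  have I2: "\<forall>v. norm v = 1 \<longrightarrow> 0 \<le> Re (-\<i> * sf A v v)" using sect_unit[OF S] True by simp
  have R1: "\<forall>v. norm v = 1 \<longrightarrow> 0 \<le> Re (1 * sf A v v)" using sect_unit[OF S] by (simp add: less_imp_le)
  have "\<forall>v. Im (sf A v v) = 0"
  proof
    fix v show "Im (sf A v v) = 0" using scale_ext[OF I1, of v] scale_ext[OF I2, of v] by simp
  qed
  moreover have "\<forall>v. 0 \<le> Re (sf A v v)" using scale_ext[OF R1] by simp
  ultimately show ?thesis using herm_case True by simp
next
  case False
  hence ap: "0 < \<alpha>" using a0 by simp
  have c0: "0 < cos \<alpha>" using a0 a1 by (intro cos_gt_zero_pi) auto
  have s0: "0 < sin \<alpha>" using ap a1 by (intro sin_gt_zero) auto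
  define u1 where "u1 = Complex (sin \<alpha>) (- cos \<alpha>)"
  define u2 where "u2 = Complex (sin \<alpha>) (cos \<alpha>)"
  have key: "\<And>z. 0 < Re z \<Longrightarrow> \<bar>Im z\<bar> \<le> tan \<alpha> * Re z \<Longrightarrow> cos \<alpha> * \<bar>Im z\<bar> \<le> sin \<alpha> * Re z"
  proof -
    fix z assume "0 < Re z" "\<bar>Im z\<bar> \<le> tan \<alpha> * Re z"
    hence "cos \<alpha> * \<bar>Im z\<bar> \<le> cos \<alpha> * (tan \<alpha> * Re z)" using c0 by (intro mult_left_mono) auto
    thus "cos \<alpha> * \<bar>Im z\<bar> \<le> sin \<alpha> * Re z" using c0 by (simp add: tan_def)
  qed
  have P1: "\<forall>v. norm v = 1 \<longrightarrow> 0 \<le> Re (u1 * sf A v v)"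
  proof (intro allI impI)
    fix v :: "complex^'n" assume v: "norm v = 1"
    have "cos \<alpha> * \<bar>Im (sf A v v)\<bar> \<le> sin \<alpha> * Re (sf A v v)" using sect_unit[OF S v] key by blast
    moreover have "- (cos \<alpha> * \<bar>Im (sf A v v)\<bar>) \<le> cos \<alpha> * Im (sf A v v)"
      using c0 by (simp add: abs_le_iff mult_left_mono abs_if)
    ultimately show "0 \<le> Re (u1 * sf A v v)" by (simp add: u1_def)
  qed
  have P2: "\<forall>v. norm v = 1 \<longrightarrow> 0 \<le> Re (u2 * sf A v v)"
  proof (intro allI impI)
    fix v :: "complex^'n" assume v: "norm v = 1"
    have "cos \<alpha> * \<bar>Im (sf A v v)\<bar> \<le> sin \<alpha> * Re (sf A v v)" using sect_unit[OF S v] key by blast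
    moreover have "cos \<alpha> * Im (sf A v v) \<le> cos \<alpha> * \<bar>Im (sf A v v)\<bar>"
      using c0 by (simp add: mult_left_mono)
    ultimately show "0 \<le> Re (u2 * sf A v v)" by (simp add: u2_def)
  qed
  have n1: "cmod u1 = 1" by (simp add: u1_def cmod_def)
  have n2: "cmod u2 = 1" by (simp add: u2_def cmod_def)
  have "\<bar>Im (cnj u2 * u1)\<bar> * cmod (sf A x y) \<le> cmod u1 * cmod (u1 + u2) * sqrt (cmod (sf A x x) * cmod (sf A y y))"
    using two_dir[of u1 u2 A x y] n1 n2 scale_ext[OF P1] scale_ext[OF P2] by simp
  moreover have "\<bar>Im (cnj u2 * u1)\<bar> = 2 * sin \<alpha> * cos \<alpha>" using s0 c0 by (simp add: u1_def u2_def)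
  moreover have "cmod (u1 + u2) = 2 * sin \<alpha>"
  proof -
    have "u1 + u2 = complex_of_real (2 * sin \<alpha>)" by (simp add: u1_def u2_def complex_eq_iff)
    thus ?thesis using s0 by simp
  qed
  ultimately have "(2 * sin \<alpha>) * (cos \<alpha> * cmod (sf A x y)) \<le> (2 * sin \<alpha>) * sqrt (cmod (sf A x x) * cmod (sf A y y))"
    using n1 by (simp add: mult_ac)
  thus ?thesis using s0 by simp
qed

lemma partB1_bound:
  fixes A :: "complex^'n^'n"
  assumes S1: "sectorial \<alpha> A" and S2: "sectorial \<alpha> (A ** A)"
  shows "1 / sqrt 2 * cmod (sf A x y) \<le> sqrt (cmod (sf A x x) * cmod (sf A y y))"
proof -
  have RA: "\<And>v. norm v = 1 \<Longrightarrow> 0 < Re (sf A v v)" using sect_unit[OF S1] by blast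
  have RA2: "\<And>v. norm v = 1 \<Longrightarrow> 0 < Re (sf (A ** A) v v)" using sect_unit[OF S2] by blast
  define u1 where "u1 = Complex 1 (-1)"
  define u2 where "u2 = Complex 1 1"
  have P1: "\<forall>v. 0 \<le> Re (u1 * sf A v v)"
  proof
    fix v show "0 \<le> Re (u1 * sf A v v)" using min_arg[of 1 A, OF _ RA RA2] by (simp add: u1_def)
  qed
  have P2: "\<forall>v. 0 \<le> Re (u2 * sf A v v)"
  proof
    fix v show "0 \<le> Re (u2 * sf A v v)" using min_arg[of "-1" A, OF _ RA RA2] by (simp add: u2_def)
  qed
  have n: "cmod u1 = cmod u2" by (simp add: u1_def u2_def cmod_def)
  have "\<bar>Im (cnj u2 * u1)\<bar> * cmod (sf A x y) \<le> cmod u1 * cmod (u1 + u2) * sqrt (cmod (sf A x x) * cmod (sf A y y))"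
    by (rule two_dir[OF n P1 P2])
  moreover have "\<bar>Im (cnj u2 * u1)\<bar> = 2" by (simp add: u1_def u2_def)
  moreover have "cmod u1 = sqrt 2" by (simp add: u1_def cmod_def)
  moreover have "cmod (u1 + u2) = 2"
  proof -
    have "u1 + u2 = 2" by (simp add: u1_def u2_def complex_eq_iff)
    thus ?thesis by simp
  qed
  ultimately have "2 * cmod (sf A x y) \<le> 2 * (sqrt 2 * sqrt (cmod (sf A x x) * cmod (sf A y y)))" by (simp add: mult_ac)
  hence "cmod (sf A x y) \<le> sqrt 2 * sqrt (cmod (sf A x x) * cmod (sf A y y))" by simp
  thus ?thesis by (simp add: divide_le_eq mult.commute)
qed

lemma real_part_mv: "real_part_mat A *v x = (1/2::complex) *s (A *v x + adjoint_mat A *v x)"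
  by (simp add: vec_eq_iff real_part_mat_def matrix_vector_mult_def sum_distrib_left sum.distrib[symmetric]
      algebra_simps add_divide_distrib)

lemma imag_part_mv: "imag_part_mat A *v x = (1/(2*\<i>)) *s (A *v x - adjoint_mat A *v x)"
  by (simp add: vec_eq_iff imag_part_mat_def matrix_vector_mult_def sum_distrib_left sum_subtractf[symmetric]
      algebra_simps diff_divide_distrib)

lemma adj_form: "cinner (adjoint_mat A *v x) x = cnj (sf A x x)"
proof -
  have "cinner (adjoint_mat A *v x) x = cinner x (A *v x)" using cinner_adj[of "adjoint_mat A" x x] by (simp add: adj_adj)
  thus ?thesis unfolding sf_def by (metis cinner_commute)
qed

lemma adj_form': "sf (adjoint_mat A) x x = cnj (sf A x x)"
  using adj_form unfolding sf_def .

lemma partB2_bound: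
  fixes A :: "complex^'n^'n"
  assumes AD: "accretive_dissipative A"
  shows "1 / sqrt 2 * cmod (sf A x y) \<le> sqrt (cmod (sf A x x) * cmod (sf A y y))"
proof -
  have Rp: "\<And>v. 0 \<le> Re (sf A v v)"
  proof -
    fix v :: "complex^'n"
    show "0 \<le> Re (sf A v v)"
    proof (cases "v = 0")
      case True thus ?thesis by (simp add: sf_def)
    next
      case False
      hence "0 < Re (cinner (real_part_mat A *v v) v)" using AD unfolding accretive_dissipative_def pos_def_def by blast
      thus ?thesis by (simp add: real_part_mv cinner_smult_left cinner_add_left adj_form adj_form' sf_def[symmetric])
    qed
  qed
  have Ip: "\<And>v. 0 \<le> Im (sf A v v)"
  proof -
    fix v :: "complex^'n"
    show "0 \<le> Im (sf A v v)"
    proof (cases "v = 0")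
      case True thus ?thesis by (simp add: sf_def)
    next
      case False
      hence "0 < Re (cinner (imag_part_mat A *v v) v)" using AD unfolding accretive_dissipative_def pos_def_def by blast
      thus ?thesis by (simp add: imag_part_mv cinner_smult_left cinner_diff_left adj_form adj_form' sf_def[symmetric])
    qed
  qed
  define u1 where "u1 = (1::complex)"
  define u2 where "u2 = - \<i>"
  have P1: "\<forall>v. 0 \<le> Re (u1 * sf A v v)" using Rp by (simp add: u1_def)
  have P2: "\<forall>v. 0 \<le> Re (u2 * sf A v v)" using Ip by (simp add: u2_def)
  have n: "cmod u1 = cmod u2" by (simp add: u1_def u2_def)
  have "\<bar>Im (cnj u2 * u1)\<bar> * cmod (sf A x y) \<le> cmod u1 * cmod (u1 + u2) * sqrt (cmod (sf A x x) * cmod (sf A y y))"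
    by (rule two_dir[OF n P1 P2])
  moreover have "\<bar>Im (cnj u2 * u1)\<bar> = 1" by (simp add: u1_def u2_def)
  moreover have "cmod u1 = 1" by (simp add: u1_def)
  moreover have "cmod (u1 + u2) = sqrt 2" by (simp add: u1_def u2_def cmod_def)
  ultimately have "cmod (sf A x y) \<le> sqrt 2 * sqrt (cmod (sf A x x) * cmod (sf A y y))" by simp
  thus ?thesis by (simp add: divide_le_eq mult.commute)
qed

theorem theorem2p10:
  fixes q :: complex and A :: "complex ^'n ^'n"
  assumes "0 < cmod q" and "cmod q \<le> 1"
    and "cmod q = 1 \<or> CARD('n) \<ge> 2"
  shows "(\<forall>\<alpha>. 0 \<le> \<alpha> \<and> \<alpha> < pi / 2 \<and> sectorial \<alpha> A \<longrightarrow>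
            cmod q * cos \<alpha> * op_norm A \<le> q_num_radius q A \<and> q_num_radius q A \<le> op_norm A)
       \<and> (((\<exists>\<alpha>. 0 \<le> \<alpha> \<and> \<alpha> < pi / 2 \<and> sectorial \<alpha> A \<and> sectorial \<alpha> (A ** A))
             \<or> accretive_dissipative A) \<longrightarrow>
            cmod q / sqrt 2 * op_norm A \<le> q_num_radius q A \<and> q_num_radius q A \<le> op_norm A)"
proof (intro conjI allI impI)
  fix \<alpha> assume a: "0 \<le> \<alpha> \<and> \<alpha> < pi / 2 \<and> sectorial \<alpha> A"
  have c0: "0 < cos \<alpha>" using a by (intro cos_gt_zero_pi) auto
  show "cmod q * cos \<alpha> * op_norm A \<le> q_num_radius q A"
    using a by (intro fin[OF assms c0] partA_bound) auto
  show "q_num_radius q A \<le> op_norm A" using W_upper assms by blast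
next
  assume h: "(\<exists>\<alpha>. 0 \<le> \<alpha> \<and> \<alpha> < pi / 2 \<and> sectorial \<alpha> A \<and> sectorial \<alpha> (A ** A))
             \<or> accretive_dissipative A"
  have "\<And>x y. 1 / sqrt 2 * cmod (sf A x y) \<le> sqrt (cmod (sf A x x) * cmod (sf A y y))"
    using h partB1_bound partB2_bound by blast
  hence "cmod q * (1 / sqrt 2) * op_norm A \<le> q_num_radius q A"
    by (intro fin[OF assms]) auto
  thus "cmod q / sqrt 2 * op_norm A \<le> q_num_radius q A" by simp
  show "q_num_radius q A \<le> op_norm A" using W_upper assms by blast
qed

end
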